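(* Let $\mathcal{R}$ be the family of all halfplanes. For $k=2$ and any $m \geq 2$, we do not have hitting $2$-cliques with respect to $\mathcal{R}$; that is, there exists a finite point set $V \subset \mathbb{R}^2$ such that for every collection of pairwise disjoint $2$-element subsets of $V$ some hyperedge of $\mathcal{H}(V,\mathcal{R},m)$ contains none of these subsets.
   Context: For a finite $V \subset \mathbb{R}^2$ and a family $\mathcal{R}$ of subsets of $\mathbb{R}^2$, $\mathcal{H}(V,\mathcal{R},m)$ is the hypergraph on $V$ whose hyperedges are the sets $V \cap R$, $R \in \mathcal{R}$, of size exactly $m$. For fixed $k,m,\mathcal{R}$ we say we have hitting $k$-cliques if for every finite $V \subset \mathbb{R}^2$ there exist pairwise disjoint $k$-element subsets of $V$ such that every hyperedge of $\mathcal{H}(V,\mathcal{R},m)$ fully contains at least one of them. *)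

theory Defs
  imports "HOL-Analysis.Analysis"
begin

definition halfplanes :: "(real \<times> real) set set" where
  "halfplanes = {{p. a * fst p + b * snd p \<ge> c} | a b c. (a, b) \<noteq> (0, 0)}"

definition hyperedges :: "(real \<times> real) set \<Rightarrow> (real \<times> real) set set \<Rightarrow> nat \<Rightarrow> (real \<times> real) set set" where
  "hyperedges V \<R> m = {V \<inter> R | R. R \<in> \<R> \<and> card (V \<inter> R) = m}"

definition hitting_cliques :: "nat \<Rightarrow> nat \<Rightarrow> (real \<times> real) set set \<Rightarrow> bool" where
  "hitting_cliques k m \<R> \<longleftrightarrow>
     (\<forall>V. finite V \<longrightarrow>
        (\<exists>\<C>. (\<forall>S\<in>\<C>. S \<subseteq> V \<and> card S = k) \<and> pairwise disjnt \<C> \<and>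
             (\<forall>e\<in>hyperedges V \<R> m. \<exists>S\<in>\<C>. S \<subseteq> e)))"

end

theory Submission
  imports Defs
begin

definition lo :: "nat \<Rightarrow> nat \<Rightarrow> nat \<Rightarrow> real" where
  "lo m d q = real q * real m ^ (m - 1 - d)"
definition hi :: "nat \<Rightarrow> nat \<Rightarrow> nat \<Rightarrow> real" where
  "hi m d q = (real q + 1) * real m ^ (m - 1 - d) - 1/2"
definition pt :: "nat \<Rightarrow> nat \<times> nat \<Rightarrow> real \<times> real" where
  "pt m n = (lo m (fst n) (snd n) + hi m (fst n) (snd n), lo m (fst n) (snd n) * hi m (fst n) (snd n))"
definition Nd :: "nat \<Rightarrow> (nat \<times> nat) set" where
  "Nd m = {(d,q). d < m \<and> q < m ^ d}"
definition chain :: "nat \<Rightarrow> nat \<Rightarrow> nat \<Rightarrow> (nat \<times> nat) set" where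
  "chain m j q = (\<lambda>d. (d, q div m ^ (j - d))) ` {..j}"
definition hp :: "real \<Rightarrow> (real \<times> real) set" where
  "hp s = {p. s * fst p + (-1) * snd p \<ge> s ^ 2}"

lemma lo_lt_hi: "m \<ge> 2 \<Longrightarrow> lo m d q < hi m d q"
proof -
  assume "m \<ge> 2"
  then have "(1::real) \<le> real m ^ (m - 1 - d)" by simp
  then show ?thesis unfolding lo_def hi_def by (simp add: algebra_simps)
qed

lemma quad_eq:
  fixes a b c e :: real
  assumes "a + b = c + e" "a * b = c * e" "a < b" "c < e"
  shows "a = c \<and> b = e"
proof -
  have "(b - a)^2 = (e - c)^2"
  proof -
    have "(b - a)^2 = (a+b)^2 - 4*(a*b)" by algebra
    also have "\<dots> = (c+e)^2 - 4*(c*e)" using assms by simp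
    also have "\<dots> = (e-c)^2" by algebra
    finally show ?thesis .
  qed
  then have "b - a = e - c" using assms(3,4) by (simp add: power2_eq_iff)
  then show ?thesis using assms(1) by linarith
qed

lemma pt_inj: assumes "m \<ge> 2" shows "inj_on (pt m) (Nd m)"
proof (rule inj_onI)
  fix x y assume x: "x \<in> Nd m" and y: "y \<in> Nd m" and e: "pt m x = pt m y"
  obtain d1 q1 where x1: "x = (d1,q1)" by force
  obtain d2 q2 where y1: "y = (d2,q2)" by force
  have "lo m d1 q1 = lo m d2 q2 \<and> hi m d1 q1 = hi m d2 q2"
    using e x1 y1 lo_lt_hi[OF assms] by (intro quad_eq) (auto simp: pt_def)
  then have l: "lo m d1 q1 = lo m d2 q2" and h: "hi m d1 q1 = hi m d2 q2" by auto
  have "hi m d1 q1 - lo m d1 q1 = hi m d2 q2 - lo m d2 q2" using l h by simp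
  then have "real m ^ (m - 1 - d1) = real m ^ (m - 1 - d2)"
    unfolding lo_def hi_def by (simp add: algebra_simps)
  then have "m - 1 - d1 = m - 1 - d2"
    using assms by (subst (asm) power_inject_exp) auto
  moreover have "d1 < m" "d2 < m" using x y x1 y1 by (auto simp: Nd_def)
  ultimately have d: "d1 = d2" by linarith
  have pos: "real m ^ (m - 1 - d1) > 0" using assms by simp
  have eq: "real q1 * real m ^ (m - 1 - d1) = real q2 * real m ^ (m - 1 - d1)"
    using l d unfolding lo_def by simp
  have ne: "real m ^ (m - 1 - d1) \<noteq> 0" using pos by linarith
  have "real q1 = real q2" using mult_right_cancel[OF ne] eq by blast
  then have "q1 = q2" by simp
  then show "x = y" using x1 y1 d by simp
qed

lemma hp_iff: assumes "m \<ge> 2"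
  shows "pt m (d,q) \<in> hp s \<longleftrightarrow> lo m d q \<le> s \<and> s \<le> hi m d q"
proof -
  define a where "a = lo m d q"
  define b where "b = hi m d q"
  have ab: "a < b" using lo_lt_hi[OF assms] a_def b_def by simp
  have "pt m (d,q) \<in> hp s \<longleftrightarrow> 0 \<le> (s - a) * (b - s)"
    by (simp add: hp_def pt_def a_def b_def algebra_simps power2_eq_square)
  also have "\<dots> \<longleftrightarrow> a \<le> s \<and> s \<le> b"
  proof
    assume h: "0 \<le> (s - a) * (b - s)"
    show "a \<le> s \<and> s \<le> b"
    proof (rule ccontr)
      assume "\<not> (a \<le> s \<and> s \<le> b)"
      then have "(s - a) * (b - s) < 0" using ab
        by (auto intro: mult_neg_pos mult_pos_neg)
      then show False using h by simp
    qed
  qed simp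
  finally show ?thesis using a_def b_def by simp
qed

lemma hp_in: "hp s \<in> halfplanes"
proof -
  have "hp s = {p. s * fst p + (-1) * snd p \<ge> s ^ 2} \<and> (s, -1::real) \<noteq> (0,0)"
    by (simp add: hp_def)
  then show ?thesis unfolding halfplanes_def by blast
qed

lemma div_iff:
  fixes q q' b :: nat
  assumes "b > 0"
  shows "(real q' * real b \<le> real q + 1/4 \<and> real q + 1/4 \<le> (real q' + 1) * real b - 1/2)
         \<longleftrightarrow> q' = q div b"
proof -
  have 1: "real q' * real b \<le> real q + 1/4 \<longleftrightarrow> q' * b \<le> q"
  proof
    assume h: "real q' * real b \<le> real q + 1/4"
    show "q' * b \<le> q"
    proof (rule ccontr)
      assume "\<not> q' * b \<le> q"
      then have "q + 1 \<le> q' * b" by simp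
      then have "real (q + 1) \<le> real (q' * b)" by (simp only: of_nat_le_iff)
      then have "real q + 1 \<le> real q' * real b" by simp
      then show False using h by linarith
    qed
  next
    assume "q' * b \<le> q"
    then have "real (q' * b) \<le> real q" by (simp only: of_nat_le_iff)
    then have "real q' * real b \<le> real q" by simp
    then show "real q' * real b \<le> real q + 1/4" by linarith
  qed
  have 2: "real q + 1/4 \<le> (real q' + 1) * real b - 1/2 \<longleftrightarrow> q < (q' + 1) * b"
  proof
    assume h: "real q + 1/4 \<le> (real q' + 1) * real b - 1/2"
    show "q < (q' + 1) * b"
    proof (rule ccontr)
      assume "\<not> q < (q' + 1) * b"
      then have "(q' + 1) * b \<le> q" by simp
      then have "real ((q' + 1) * b) \<le> real q" by (simp only: of_nat_le_iff)
      then have "(real q' + 1) * real b \<le> real q" by (simp add: algebra_simps)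
      then show False using h by linarith
    qed
  next
    assume "q < (q' + 1) * b"
    then have "q + 1 \<le> (q' + 1) * b" by simp
    then have "real (q + 1) \<le> real ((q' + 1) * b)" by (simp only: of_nat_le_iff)
    then have "real q + 1 \<le> (real q' + 1) * real b" by (simp add: algebra_simps)
    then show "real q + 1/4 \<le> (real q' + 1) * real b - 1/2" by linarith
  qed
  have 3: "(q' * b \<le> q \<and> q < (q' + 1) * b) \<longleftrightarrow> q' = q div b"
  proof
    assume h: "q' * b \<le> q \<and> q < (q' + 1) * b"
    show "q' = q div b"
    proof (rule sym, rule div_nat_eqI)
      show "b * q' \<le> q" using h by (simp add: mult.commute)
      show "q < b * Suc q'" using h by (simp add: mult.commute)
    qed
  next
    assume e: "q' = q div b"
    have "q div b * b \<le> q" by simp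
    moreover have "q < b + q div b * b" using assms by (rule dividend_less_div_times)
    ultimately show "q' * b \<le> q \<and> q < (q' + 1) * b" using e by (simp add: algebra_simps)
  qed
  show ?thesis by (simp only: 1 2 3)
qed


lemma chain_sub: assumes "j < m" "q < m ^ j" shows "chain m j q \<subseteq> Nd m"
proof
  fix x assume "x \<in> chain m j q"
  then obtain d where d: "d \<le> j" "x = (d, q div m ^ (j - d))" unfolding chain_def by auto
  have "m ^ j = m ^ d * m ^ (j - d)" using d(1) by (simp add: power_add[symmetric])
  then have "q < m ^ d * m ^ (j - d)" using assms(2) by simp
  then have "q div m ^ (j - d) < m ^ d" by (rule less_mult_imp_div_less)
  then show "x \<in> Nd m" using d assms(1) unfolding Nd_def by auto
qed

lemma card_chain: "card (chain m j q) = Suc j"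
proof -
  have "inj_on (\<lambda>d. (d, q div m ^ (j - d))) {..j}" by (rule inj_onI) simp
  then show ?thesis unfolding chain_def by (simp add: card_image)
qed

lemma chain_step:
  assumes "0 < m" "c < m"
  shows "chain m (Suc j) (q * m + c) = insert (Suc j, q * m + c) (chain m j q)"
proof -
  have eq: "(q * m + c) div m ^ (Suc j - d) = q div m ^ (j - d)" if "d \<le> j" for d
  proof -
    have "Suc j - d = Suc (j - d)" using that by simp
    then have "(q * m + c) div m ^ (Suc j - d) = (q * m + c) div (m * m ^ (j - d))" by simp
    also have "\<dots> = (q * m + c) div m div m ^ (j - d)" by (rule div_mult2_eq)
    also have "(q * m + c) div m = q" using assms by simp
    finally show ?thesis .
  qed
  have "chain m (Suc j) (q * m + c) =
        insert (Suc j, q * m + c) ((\<lambda>d. (d, (q * m + c) div m ^ (Suc j - d))) ` {..j})"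
    unfolding chain_def by (simp add: atMost_Suc)
  also have "(\<lambda>d. (d, (q * m + c) div m ^ (Suc j - d))) ` {..j} = chain m j q"
    unfolding chain_def using eq by (auto simp: image_iff)
  finally show ?thesis .
qed

lemma trace:
  assumes m2: "m \<ge> 2" and q: "q < m ^ (m - 1)"
  shows "pt m ` Nd m \<inter> hp (real q + 1/4) = pt m ` chain m (m - 1) q"
proof -
  have key: "pt m (d, q') \<in> hp (real q + 1/4) \<longleftrightarrow> q' = q div m ^ (m - 1 - d)" for d q'
  proof -
    have b: "m ^ (m - 1 - d) > 0" using m2 by simp
    have "pt m (d, q') \<in> hp (real q + 1/4) \<longleftrightarrow>
          lo m d q' \<le> real q + 1/4 \<and> real q + 1/4 \<le> hi m d q'"
      by (rule hp_iff[OF m2])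
    also have "\<dots> \<longleftrightarrow> (real q' * real (m ^ (m - 1 - d)) \<le> real q + 1/4 \<and>
         real q + 1/4 \<le> (real q' + 1) * real (m ^ (m - 1 - d)) - 1/2)"
      unfolding lo_def hi_def by (simp add: of_nat_power)
    also have "\<dots> \<longleftrightarrow> q' = q div m ^ (m - 1 - d)" by (rule div_iff[OF b])
    finally show ?thesis .
  qed
  have sub: "chain m (m - 1) q \<subseteq> Nd m" using m2 q by (intro chain_sub) auto
  show ?thesis
  proof
    show "pt m ` Nd m \<inter> hp (real q + 1/4) \<subseteq> pt m ` chain m (m - 1) q"
    proof
      fix x assume "x \<in> pt m ` Nd m \<inter> hp (real q + 1/4)"
      then obtain d q' where x: "x = pt m (d, q')" "(d, q') \<in> Nd m" "pt m (d, q') \<in> hp (real q + 1/4)"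
        by auto
      then have "q' = q div m ^ (m - 1 - d)" using key by simp
      moreover have "d \<le> m - 1" using x(2) unfolding Nd_def by auto
      ultimately have "(d, q') \<in> chain m (m - 1) q" unfolding chain_def by auto
      then show "x \<in> pt m ` chain m (m - 1) q" using x(1) by simp
    qed
  next
    show "pt m ` chain m (m - 1) q \<subseteq> pt m ` Nd m \<inter> hp (real q + 1/4)"
    proof
      fix x assume "x \<in> pt m ` chain m (m - 1) q"
      then obtain d where d: "d \<le> m - 1" "x = pt m (d, q div m ^ (m - 1 - d))"
        unfolding chain_def by auto
      have "(d, q div m ^ (m - 1 - d)) \<in> Nd m" using sub d(1) unfolding chain_def by auto
      moreover have "x \<in> hp (real q + 1/4)" using d(2) key by simp
      ultimately show "x \<in> pt m ` Nd m \<inter> hp (real q + 1/4)" using d(2) by auto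
    qed
  qed
qed

lemma comb:
  assumes m2: "m \<ge> 2" and C2: "\<forall>S\<in>C. card S = 2" and D: "pairwise disjnt C"
  shows "j < m \<Longrightarrow> \<exists>q < m ^ j. \<forall>S\<in>C. \<not> S \<subseteq> pt m ` chain m j q"
proof (induction j)
  case 0
  have "chain m 0 0 = {(0, 0)}" unfolding chain_def by auto
  then have "pt m ` chain m 0 0 = {pt m (0,0)}" by simp
  moreover have "\<not> S \<subseteq> {a}" if "S \<in> C" for S and a :: "real \<times> real"
  proof
    assume "S \<subseteq> {a}"
    then have "card S \<le> card {a}" by (intro card_mono) auto
    then show False using C2 that by simp
  qed
  ultimately show ?case by auto
next
  case (Suc j)
  then obtain q where q: "q < m ^ j" and good: "\<forall>S\<in>C. \<not> S \<subseteq> pt m ` chain m j q" by auto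
  define P where "P = pt m ` chain m j q"
  define y where "y c = pt m (Suc j, q * m + c)" for c
  have jm: "j < m" "Suc j < m" using Suc.prems by auto
  have subP: "chain m j q \<subseteq> Nd m" using chain_sub[OF jm(1) q] .
  have cardP: "card P = Suc j"
    unfolding P_def using card_chain inj_on_subset[OF pt_inj[OF m2] subP]
    by (simp add: card_image)
  have childNd: "(Suc j, q * m + c) \<in> Nd m" if "c < m" for c
  proof -
    have "q * m + c < q * m + m" using that by simp
    also have "\<dots> = (q + 1) * m" by simp
    also have "\<dots> \<le> m ^ j * m" using q by (intro mult_right_mono) auto
    also have "\<dots> = m ^ Suc j" by (simp add: mult.commute)
    finally show ?thesis using jm unfolding Nd_def by simp
  qed
  define Bad where "Bad = {c. c < m \<and> (\<exists>S\<in>C. S \<subseteq> insert (y c) P)}"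
  have ex: "\<exists>z. z \<in> P \<and> z \<noteq> y c \<and> (\<exists>S\<in>C. y c \<in> S \<and> z \<in> S)" if "c \<in> Bad" for c
  proof -
    have "c < m \<and> (\<exists>S\<in>C. S \<subseteq> insert (y c) P)" using that by (simp add: Bad_def)
    then obtain S where S: "S \<in> C" "S \<subseteq> insert (y c) P" by blast
    have "\<not> S \<subseteq> P" using good S(1) unfolding P_def by auto
    then have yS: "y c \<in> S" using S(2) by auto
    have "\<not> S \<subseteq> {y c}"
    proof
      assume "S \<subseteq> {y c}"
      then have "card S \<le> card {y c}" by (intro card_mono) auto
      then show False using C2 S(1) by simp
    qed
    then obtain z where z: "z \<in> S" "z \<noteq> y c" by auto
    then have "z \<in> P" using S(2) by auto
    then show ?thesis using S(1) yS z by blast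
  qed
  define g where "g c = (SOME z. z \<in> P \<and> z \<noteq> y c \<and> (\<exists>S\<in>C. y c \<in> S \<and> z \<in> S))" for c
  have gprop: "g c \<in> P \<and> g c \<noteq> y c \<and> (\<exists>S\<in>C. y c \<in> S \<and> g c \<in> S)" if "c \<in> Bad" for c
    unfolding g_def using someI_ex[OF ex[OF that]] .
  have ginj: "inj_on g Bad"
  proof (rule inj_onI)
    fix c1 c2 assume c1: "c1 \<in> Bad" and c2: "c2 \<in> Bad" and e: "g c1 = g c2"
    obtain S1 where S1: "S1 \<in> C" "y c1 \<in> S1" "g c1 \<in> S1" using gprop[OF c1] by auto
    obtain S2 where S2: "S2 \<in> C" "y c2 \<in> S2" "g c2 \<in> S2" using gprop[OF c2] by auto
    have "S1 = S2"
    proof (rule ccontr)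
      assume "S1 \<noteq> S2"
      then have "disjnt S1 S2" using D S1(1) S2(1) unfolding pairwise_def by blast
      then show False using S1(3) S2(3) e unfolding disjnt_def by auto
    qed
    obtain a b where ab: "S1 = {a, b}" "a \<noteq> b" using C2 S1(1) by (meson card_2_iff)
    have "y c1 = y c2"
      using ab S1 S2 \<open>S1 = S2\<close> e gprop[OF c1] gprop[OF c2] by auto
    then have "(Suc j, q * m + c1) = (Suc j, q * m + c2)"
      using inj_onD[OF pt_inj[OF m2]] childNd c1 c2 unfolding y_def Bad_def by blast
    then show "c1 = c2" by simp
  qed
  have "g ` Bad \<subseteq> P" using gprop by auto
  moreover have "finite P" unfolding P_def chain_def by simp
  ultimately have "card Bad \<le> card P" using ginj by (metis card_inj_on_le)
  then have cB: "card Bad < m" using cardP jm by simp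
  have "\<exists>c<m. c \<notin> Bad"
  proof (rule ccontr)
    assume "\<not> (\<exists>c<m. c \<notin> Bad)"
    then have "{..<m} \<subseteq> Bad" by auto
    moreover have "finite Bad" unfolding Bad_def by simp
    ultimately have "card {..<m} \<le> card Bad" by (rule card_mono[rotated])
    then show False using cB by simp
  qed
  then obtain c where c: "c < m" "c \<notin> Bad" by auto
  have m0: "0 < m" using m2 by simp
  have "pt m ` chain m (Suc j) (q * m + c) = insert (y c) P"
    unfolding P_def y_def chain_step[OF m0 c(1)] by simp
  moreover have "q * m + c < m ^ Suc j" using childNd[OF c(1)] unfolding Nd_def by simp
  ultimately show ?case using c unfolding Bad_def by auto
qed


theorem corollary6:
  fixes m :: nat
  assumes "m \<ge> 2"
  shows "\<not> hitting_cliques 2 m halfplanes"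
proof
  assume h: "hitting_cliques 2 m halfplanes"
  define V where "V = pt m ` Nd m"
  have "Nd m \<subseteq> {..<m} \<times> {..<m ^ m}"
  proof
    fix x assume "x \<in> Nd m"
    then obtain d q where x: "x = (d, q)" "d < m" "q < m ^ d" unfolding Nd_def by auto
    have "m ^ d \<le> m ^ m" using x(2) assms by (intro power_increasing) auto
    then show "x \<in> {..<m} \<times> {..<m ^ m}" using x by auto
  qed
  then have "finite (Nd m)" by (rule finite_subset) simp
  then have fin: "finite V" unfolding V_def by simp
  have "\<exists>C. (\<forall>S\<in>C. S \<subseteq> V \<and> card S = 2) \<and> pairwise disjnt C \<and>
             (\<forall>e\<in>hyperedges V halfplanes m. \<exists>S\<in>C. S \<subseteq> e)"
    using hitting_cliques_def[THEN iffD1, OF h, rule_format, OF fin] .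
  then obtain C where C1: "\<forall>S\<in>C. S \<subseteq> V \<and> card S = 2" and C2: "pairwise disjnt C"
    and C3: "\<forall>e\<in>hyperedges V halfplanes m. \<exists>S\<in>C. S \<subseteq> e"
    by (elim exE conjE)
  have C1': "\<forall>S\<in>C. card S = 2" using C1 by simp
  have m1: "m - 1 < m" using assms by simp
  obtain q where q: "q < m ^ (m - 1)" and good: "\<forall>S\<in>C. \<not> S \<subseteq> pt m ` chain m (m - 1) q"
    using comb[OF assms C1' C2 m1] by (elim exE conjE)
  define e where "e = V \<inter> hp (real q + 1/4)"
  have e_eq: "e = pt m ` chain m (m - 1) q" unfolding e_def V_def using trace[OF assms q] .
  have sub: "chain m (m - 1) q \<subseteq> Nd m" using chain_sub[OF m1 q] .
  have "card e = Suc (m - 1)"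
    unfolding e_eq using card_chain inj_on_subset[OF pt_inj[OF assms] sub]
    by (simp add: card_image)
  then have ce: "card (V \<inter> hp (real q + 1/4)) = m" using assms unfolding e_def by simp
  have "e \<in> hyperedges V halfplanes m"
    unfolding hyperedges_def e_def
    by (rule CollectI, rule exI[of _ "hp (real q + 1/4)"]) (simp add: hp_in ce)
  then obtain S where "S \<in> C" "S \<subseteq> e" using C3 by blast
  then show False using good e_eq by auto
qed

end
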